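(* Let $\Pi_q$ be a projective plane (not necessarily Desarguesian) of order $q\ge 2$, and let $s(2,q)$ denote the smallest size of a saturating set in $\Pi_q$. Then \[ s(2,q)\leq 2\sqrt{(q+1)\ln (q+1)}+2 . \]
   Context: A point set $S\subset \Pi_q$ is saturating if every point of $\Pi_q\setminus S$ is collinear with two points of $S$. Here $\ln$ denotes the natural logarithm. *)

theory Defs
  imports Complex_Main
begin

definition projective_plane :: "'a set \<Rightarrow> 'a set set \<Rightarrow> bool" where
  "projective_plane P L \<longleftrightarrow>
     (\<forall>l\<in>L. l \<subseteq> P) \<and>
     (\<forall>x\<in>P. \<forall>y\<in>P. x \<noteq> y \<longrightarrow> (\<exists>!l. l \<in> L \<and> x \<in> l \<and> y \<in> l)) \<and>
     (\<forall>l\<in>L. \<forall>m\<in>L. l \<noteq> m \<longrightarrow> (\<exists>!x. x \<in> P \<and> x \<in> l \<and> x \<in> m)) \<and>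
     (\<exists>Q. Q \<subseteq> P \<and> card Q = 4 \<and>
        (\<forall>l\<in>L. card (Q \<inter> l) \<le> 2))"

definition projective_plane_of_order :: "'a set \<Rightarrow> 'a set set \<Rightarrow> nat \<Rightarrow> bool" where
  "projective_plane_of_order P L q \<longleftrightarrow>
     projective_plane P L \<and> finite P \<and> (\<forall>l\<in>L. card l = q + 1)"

definition saturating :: "'a set \<Rightarrow> 'a set set \<Rightarrow> 'a set \<Rightarrow> bool" where
  "saturating P L S \<longleftrightarrow> S \<subseteq> P \<and>
     (\<forall>x\<in>P - S. \<exists>a\<in>S. \<exists>b\<in>S. a \<noteq> b \<and> (\<exists>l\<in>L. x \<in> l \<and> a \<in> l \<and> b \<in> l))"

definition min_saturating_size :: "'a set \<Rightarrow> 'a set set \<Rightarrow> nat" where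
  "min_saturating_size P L = Min (card ` {S. saturating P L S})"

end

theory Submission imports Defs begin

lemma sum_real_lessThan: "(\<Sum>i<k. real i) = real k * (real k - 1) / 2"
  by (induction k) (auto simp: field_simps)

lemma analytic:
  fixes q j :: nat
  assumes q2: "q \<ge> 2" and Kq: "2 * sqrt ((real q + 1) * ln (real q + 1)) < real q"
    and j: "j = nat \<lfloor>2 * sqrt ((real q + 1) * ln (real q + 1))\<rfloor>"
  shows "(real q * real q + real q + 1) * (\<Prod>i<j+2. 1 - real i * (real q - 1) / (real q * (real q + 1))) < 1"
proof -
  define Q where "Q = real q"
  define m where "m = Q + 1"
  define Lg where "Lg = ln m"
  define K where "K = 2 * sqrt (m * Lg)"
  define n where "n = Q*Q + Q + 1"
  define J where "J = real j"
  define b where "b i = real i * (Q - 1) / (Q * m)" for i :: nat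
  have Q2: "Q \<ge> 2" using q2 unfolding Q_def by simp
  have m1: "m > 1" using Q2 m_def by simp
  have Lg0: "Lg \<ge> 0" using m1 Lg_def by simp
  have K0: "K \<ge> 0" unfolding K_def using Lg0 m1 by simp
  have KQ: "K < Q" using Kq unfolding K_def Q_def m_def Lg_def by simp
  have jfl: "j = nat \<lfloor>K\<rfloor>" using j unfolding K_def Q_def m_def Lg_def by simp
  have JK: "J \<le> K" "K < J + 1" using K0 unfolding J_def jfl by (simp_all add: of_nat_nat)
  have jq: "j < q" using JK KQ unfolding J_def Q_def by linarith
  have K2: "K^2 = 4 * m * Lg" unfolding K_def using Lg0 m1 by (simp add: power_mult_distrib)
  have K2l: "K^2 < (J+1)^2" using JK K0 by (intro power_strict_mono) auto
  have bi: "0 \<le> b i \<and> b i \<le> 1" if "i < j + 2" for i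
  proof -
    have "real i \<le> m" using that jq unfolding m_def Q_def by simp
    hence "real i * (Q - 1) \<le> m * (Q - 1)" using Q2 by (intro mult_right_mono) auto
    also have "\<dots> \<le> Q * m" using m1 by (simp add: algebra_simps)
    finally show ?thesis unfolding b_def using Q2 m1 by (simp add: divide_le_eq)
  qed
  have "(\<Prod>i<j+2. 1 - b i) \<le> (\<Prod>i<j+2. exp (- b i))"
  proof (rule prod_mono)
    fix i assume "i \<in> {..<j+2}"
    hence "0 \<le> b i \<and> b i \<le> 1" using bi by auto
    moreover have "1 + (- b i) \<le> exp (- b i)" by (rule exp_ge_add_one_self)
    ultimately show "0 \<le> 1 - b i \<and> 1 - b i \<le> exp (- b i)" by simp
  qed
  also have "\<dots> = exp (- (\<Sum>i<j+2. b i))"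
    using exp_sum[of "{..<j+2}" "\<lambda>i. - b i"] by (simp only: sum_negf finite_lessThan)
  finally have Pb: "(\<Prod>i<j+2. 1 - b i) \<le> exp (- (\<Sum>i<j+2. b i))" .
  have Sb: "(\<Sum>i<j+2. b i) = (Q - 1) * (J + 2) * (J + 1) / (2 * Q * m)"
  proof -
    have "(\<Sum>i<j+2. b i) = (\<Sum>i<j+2. real i * (Q - 1)) / (Q * m)"
      unfolding b_def by (rule sum_divide_distrib[symmetric])
    also have "\<dots> = (\<Sum>i<j+2. real i) * (Q - 1) / (Q * m)" by (simp only: sum_distrib_right)
    also have "\<dots> = (Q - 1) * (J + 2) * (J + 1) / (2 * Q * m)"
      unfolding sum_real_lessThan J_def by (simp add: field_simps)
    finally show ?thesis .
  qed
  have "Q * Q \<ge> 0" by simp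
  hence n0: "n > 0" unfolding n_def using Q2 by linarith
  have "ln n = ln (m^2 * (n / m^2))" using m1 by simp
  also have "\<dots> = ln (m^2) + ln (n / m^2)" by (subst ln_mult) (use m1 n0 in auto)
  also have "\<dots> \<le> 2 * Lg + (n / m^2 - 1)" unfolding Lg_def
    using m1 n0 by (intro add_mono ln_le_minus_one) (auto simp: ln_realpow)
  also have "n / m^2 - 1 = - Q / m^2"
  proof -
    have nm: "n = m^2 - Q" unfolding n_def m_def by (simp add: power2_eq_square algebra_simps)
    have "m^2 \<noteq> 0" using m1 by simp
    thus ?thesis unfolding nm by (simp add: diff_divide_distrib)
  qed
  finally have lnn: "ln n \<le> 2 * Lg - Q / m^2" by simp
  have poly: "Q * (J+1)^2 - 2 * Q^2 / m \<le> (Q - 1) * (J + 1) * (J + 2)"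
  proof (cases "j + 2 \<le> q")
    case True
    hence "J + 2 \<le> Q" unfolding J_def Q_def by simp
    hence "(J+1)*(J+2) \<le> (J+1)*Q" unfolding J_def by (intro mult_left_mono) auto
    hence "Q * (J+1)^2 \<le> (Q - 1) * (J + 1) * (J + 2)"
      by (simp add: power2_eq_square algebra_simps)
    moreover have "2 * Q^2 / m \<ge> 0" using m1 by simp
    ultimately show ?thesis by linarith
  next
    case False
    hence "j + 1 = q" using jq by simp
    hence JQ: "J + 1 = Q" unfolding J_def Q_def by (metis of_nat_1 of_nat_add)
    have "Q * (J+1)^2 - (Q - 1) * (J + 1) * (J + 2) = Q" unfolding JQ[symmetric]
      by (simp add: power2_eq_square algebra_simps)
    moreover have "Q \<le> 2 * Q^2 / m" using m1 Q2 unfolding m_def by (simp add: field_simps power2_eq_square)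
    ultimately show ?thesis by linarith
  qed
  have QM: "Q * m > 0" using Q2 m1 by simp
  have "2 * Q * m * ln n \<le> 2 * Q * m * (2 * Lg - Q / m^2)"
    using lnn QM by (intro mult_left_mono) auto
  also have "\<dots> = Q * K^2 - 2 * Q^2 / m" unfolding K2 using m1 by (simp add: field_simps power2_eq_square)
  also have "\<dots> < Q * (J+1)^2 - 2 * Q^2 / m" using K2l Q2 by simp
  also have "\<dots> \<le> (Q - 1) * (J + 1) * (J + 2)" by (rule poly)
  finally have "ln n < (\<Sum>i<j+2. b i)" unfolding Sb using QM
    by (simp add: field_simps)
  hence "exp (ln n - (\<Sum>i<j+2. b i)) < exp 0" by simp
  moreover have "exp (ln n - x) = n * exp (- x)" for x
    using n0 by (simp add: exp_diff exp_minus divide_inverse)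
  ultimately have e: "n * exp (- (\<Sum>i<j+2. b i)) < 1" by simp
  have "n * (\<Prod>i<j+2. 1 - b i) \<le> n * exp (- (\<Sum>i<j+2. b i))"
    using Pb n0 by (intro mult_left_mono) auto
  hence "n * (\<Prod>i<j+2. 1 - b i) < 1" using e by linarith
  thus ?thesis unfolding n_def b_def Q_def m_def by simp
qed



locale pp =
  fixes P :: "'a set" and L :: "'a set set" and q :: nat
  assumes ord: "projective_plane_of_order P L q" and q2: "q \<ge> 2"
begin

lemma finP: "finite P" using ord by (simp add: projective_plane_of_order_def)
lemma lsub: "l \<in> L \<Longrightarrow> l \<subseteq> P" using ord by (auto simp: projective_plane_of_order_def projective_plane_def)
lemma cardl: "l \<in> L \<Longrightarrow> card l = q+1" using ord by (simp add: projective_plane_of_order_def)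
lemma finl: "l \<in> L \<Longrightarrow> finite l" using cardl by (metis add_is_0 card.infinite one_neq_zero)
lemma line_ex1: "x\<in>P \<Longrightarrow> y\<in>P \<Longrightarrow> x\<noteq>y \<Longrightarrow> \<exists>!l. l\<in>L \<and> x\<in>l \<and> y\<in>l"
  using ord by (simp add: projective_plane_of_order_def projective_plane_def)
lemma meet: "l\<in>L \<Longrightarrow> m\<in>L \<Longrightarrow> l\<noteq>m \<Longrightarrow> \<exists>x. x\<in>P \<and> x\<in>l \<and> x\<in>m"
  using ord unfolding projective_plane_of_order_def projective_plane_def by metis
lemma quad: "\<exists>Q. Q\<subseteq>P \<and> card Q = 4 \<and> (\<forall>l\<in>L. card(Q\<inter>l) \<le> 2)"
  using ord by (simp add: projective_plane_of_order_def projective_plane_def)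

definition lin :: "'a \<Rightarrow> 'a \<Rightarrow> 'a set" where
  "lin x y = (THE l. l\<in>L \<and> x\<in>l \<and> y\<in>l)"

lemma lin: "x\<in>P \<Longrightarrow> y\<in>P \<Longrightarrow> x\<noteq>y \<Longrightarrow> lin x y \<in> L \<and> x \<in> lin x y \<and> y \<in> lin x y"
  unfolding lin_def by (rule theI', rule line_ex1)

lemma lin_uniq: "x\<in>P \<Longrightarrow> y\<in>P \<Longrightarrow> x\<noteq>y \<Longrightarrow> l\<in>L \<Longrightarrow> x\<in>l \<Longrightarrow> y\<in>l \<Longrightarrow> l = lin x y"
  using lin line_ex1 by blast

lemma triangle: "\<exists>a b c. a\<in>P \<and> b\<in>P \<and> c\<in>P \<and> a\<noteq>b \<and> c \<notin> lin a b"
proof -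
  obtain Q where Q: "Q\<subseteq>P" "card Q = 4" "\<forall>l\<in>L. card(Q\<inter>l) \<le> 2" using quad by blast
  obtain a b c d where abc: "Q = {a,b,c,d}" "a\<noteq>b" "a\<noteq>c" "b\<noteq>c"
    using Q(2) by (auto simp: card_Suc_eq numeral_eq_Suc)
  have P: "a\<in>P" "b\<in>P" "c\<in>P" using Q(1) abc by auto
  show ?thesis
  proof (intro exI conjI)
    show "c \<notin> lin a b"
    proof
      assume c: "c \<in> lin a b"
      have l: "lin a b \<in> L" "a \<in> lin a b" "b \<in> lin a b" using lin P abc by auto
      have "{a,b,c} \<subseteq> Q \<inter> lin a b" using abc c l by auto
      hence "card {a,b,c} \<le> card (Q \<inter> lin a b)" by (intro card_mono) (use finl l in auto)
      with abc Q(3) l show False by auto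
    qed
  qed (use P abc in auto)
qed


lemma cardP: "card P \<le> q*q + q + 1"
proof -
  obtain a b c where abc: "a\<in>P" "b\<in>P" "c\<in>P" "a\<noteq>b" "c \<notin> lin a b" using triangle by blast
  define l where "l = lin a b"
  have l: "l \<in> L" using lin abc l_def by auto
  have sub: "P \<subseteq> insert c (\<Union>z\<in>l. lin c z - {c})"
  proof
    fix y assume y: "y \<in> P"
    show "y \<in> insert c (\<Union>z\<in>l. lin c z - {c})"
    proof (cases "y = c")
      case False
      have ly: "lin c y \<in> L" "c \<in> lin c y" "y \<in> lin c y" using lin y abc False by auto
      have "lin c y \<noteq> l" using ly abc l_def by auto
      then obtain z where z: "z\<in>P" "z \<in> lin c y" "z \<in> l" using meet ly l by blast
      have zc: "z \<noteq> c" using z abc l_def by auto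
      have "lin c y = lin c z" using lin_uniq[OF abc(3) z(1) zc[symmetric] ly(1) ly(2) z(2)] .
      thus ?thesis using z ly False by auto
    qed simp
  qed
  have "card P \<le> card (insert c (\<Union>z\<in>l. lin c z - {c}))"
  proof (rule card_mono[OF _ sub])
    have "finite (lin c z)" if "z \<in> l" for z
    proof -
      have "z \<in> P" "z \<noteq> c" using that lsub l abc l_def by auto
      thus ?thesis using lin abc finl by blast
    qed
    thus "finite (insert c (\<Union>z\<in>l. lin c z - {c}))" using finl l by auto
  qed
  also have "\<dots> \<le> Suc (card (\<Union>z\<in>l. lin c z - {c}))" by (rule card_insert_le_m1) auto
  also have "card (\<Union>z\<in>l. lin c z - {c}) \<le> (\<Sum>z\<in>l. card (lin c z - {c}))"
    by (rule card_UN_le) (use finl l in auto)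
  also have "\<dots> = (\<Sum>z\<in>l. q)"
  proof (rule sum.cong)
    fix z assume z: "z \<in> l"
    have zP: "z \<in> P" "z \<noteq> c" using z lsub l abc l_def by auto
    have "lin c z \<in> L" "c \<in> lin c z" using lin zP abc by auto
    thus "card (lin c z - {c}) = q" using cardl finl by (simp add: card_Diff_singleton)
  qed simp
  also have "\<dots> = (q+1)*q" using cardl l by simp
  finally show ?thesis by (simp add: algebra_simps)
qed

lemma cardP_ge: "card P \<ge> q+1"
proof -
  obtain a b c where abc: "a\<in>P" "b\<in>P" "c\<in>P" "a\<noteq>b" "c \<notin> lin a b" using triangle by blast
  have "lin a b \<in> L" using lin abc by auto
  thus ?thesis using cardl lsub card_mono finP by metis
qed

definition U :: "'a set \<Rightarrow> 'a set" where
  "U S = {x\<in>P-S. \<not>(\<exists>a\<in>S. \<exists>b\<in>S. a\<noteq>b \<and> (\<exists>l\<in>L. x\<in>l \<and> a\<in>l \<and> b\<in>l))}"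

definition F :: "'a set \<Rightarrow> 'a \<Rightarrow> 'a set" where
  "F S x = insert x (\<Union>s\<in>S. lin x s)"

lemma U_empty_sat: "S \<subseteq> P \<Longrightarrow> U S = {} \<Longrightarrow> saturating P L S"
  unfolding saturating_def U_def by blast

lemma U_insert:
  assumes S: "S \<subseteq> P" and p: "p \<in> P" "p \<notin> S"
  shows "U (insert p S) = {x\<in>U S. p \<notin> F S x}"
proof (intro set_eqI iffI)
  fix x assume x: "x \<in> U (insert p S)"
  hence xU: "x \<in> U S" unfolding U_def by blast
  have "p \<notin> F S x"
  proof
    assume "p \<in> F S x"
    moreover have "x \<noteq> p" using x unfolding U_def by blast
    ultimately obtain s where s: "s \<in> S" "p \<in> lin x s" unfolding F_def by auto
    have xs: "x \<in> P" "x \<noteq> s" using xU s unfolding U_def by auto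
    have "lin x s \<in> L" "x \<in> lin x s" "s \<in> lin x s" using lin xs S s by auto
    moreover have "s \<noteq> p" using s p by auto
    ultimately show False using x s unfolding U_def by blast
  qed
  thus "x \<in> {x\<in>U S. p \<notin> F S x}" using xU by blast
next
  fix x assume x: "x \<in> {x\<in>U S. p \<notin> F S x}"
  hence xU: "x \<in> U S" and pF: "p \<notin> F S x" by auto
  have xp: "x \<noteq> p" using pF unfolding F_def by auto
  have xP: "x \<in> P" "x \<notin> S" using xU unfolding U_def by auto
  have no: False if "b \<in> S" "l \<in> L" "x \<in> l" "p \<in> l" "b \<in> l" for b l
  proof -
    have "x \<noteq> b" using xP that by auto
    hence "l = lin x b" using lin_uniq[of x b l] xP that S by auto
    thus False using pF that unfolding F_def by auto
  qed
  show "x \<in> U (insert p S)"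
    using xU xp xP no unfolding U_def by blast
qed


lemma F_sub: assumes "S \<subseteq> P" "x \<in> U S" shows "F S x \<subseteq> P"
proof -
  have "x \<in> P" "x \<notin> S" using assms unfolding U_def by auto
  hence "lin x s \<subseteq> P" if "s \<in> S" for s using lin[of x s] lsub that assms by auto
  thus ?thesis using \<open>x\<in>P\<close> unfolding F_def by auto
qed

lemma S_sub_F: assumes "S \<subseteq> P" "x \<in> U S" shows "S \<subseteq> F S x"
proof -
  have "x \<in> P" "x \<notin> S" using assms unfolding U_def by auto
  thus ?thesis using lin[of x] assms unfolding F_def by blast
qed

lemma card_F:
  assumes S: "S \<subseteq> P" and xU: "x \<in> U S"
  shows "card (F S x) \<ge> 1 + card S * q"
proof -
  have xP: "x \<in> P" "x \<notin> S" using xU unfolding U_def by auto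
  have finS: "finite S" using S finP finite_subset by blast
  have ls: "lin x s \<in> L" "x \<in> lin x s" "s \<in> lin x s" if "s \<in> S" for s
    using lin[of x s] that xP S by auto
  have eq: "F S x = insert x (\<Union>s\<in>S. lin x s - {x})" unfolding F_def by auto
  have disj: "(lin x s - {x}) \<inter> (lin x t - {x}) = {}" if st: "s \<in> S" "t \<in> S" "s \<noteq> t" for s t
  proof (rule ccontr)
    assume "(lin x s - {x}) \<inter> (lin x t - {x}) \<noteq> {}"
    then obtain y where y: "y \<in> lin x s" "y \<in> lin x t" "y \<noteq> x" by auto
    have yP: "y \<in> P" using y ls st lsub by blast
    have "lin x s = lin x y" using lin_uniq[of x y "lin x s"] xP yP y ls st by auto
    moreover have "lin x t = lin x y" using lin_uniq[of x y "lin x t"] xP yP y ls st by auto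
    ultimately have "t \<in> lin x s" using ls st by auto
    thus False using xU st ls unfolding U_def by blast
  qed
  have "card (\<Union>s\<in>S. lin x s - {x}) = (\<Sum>s\<in>S. card (lin x s - {x}))"
    by (rule card_UN_disjoint) (use finS finl ls disj in auto)
  also have "\<dots> = (\<Sum>s\<in>S. q)" using ls cardl finl by (intro sum.cong) (auto simp: card_Diff_singleton)
  finally have c: "card (\<Union>s\<in>S. lin x s - {x}) = card S * q" by simp
  define V where "V = (\<Union>s\<in>S. lin x s - {x})"
  have "finite V" unfolding V_def using finS finl ls by auto
  moreover have "x \<notin> V" unfolding V_def by auto
  ultimately have "card (insert x V) = Suc (card V)" by simp
  moreover have "card V = card S * q" unfolding V_def by (rule c)
  moreover have "F S x = insert x V" unfolding V_def by (rule eq)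
  ultimately show ?thesis by simp
qed

lemma avg:
  fixes f :: "'b \<Rightarrow> real"
  assumes "finite A" "A \<noteq> {}"
  shows "\<exists>a\<in>A. f a * real (card A) \<le> (\<Sum>x\<in>A. f x)"
proof (rule ccontr)
  assume "\<not> ?thesis"
  hence h: "\<And>a. a \<in> A \<Longrightarrow> (\<Sum>x\<in>A. f x) < f a * real (card A)" by auto
  have "(\<Sum>a\<in>A. (\<Sum>x\<in>A. f x)) < (\<Sum>a\<in>A. f a * real (card A))"
    by (rule sum_strict_mono) (use assms h in auto)
  thus False by (simp add: sum_distrib_right mult.commute)
qed

lemma step:
  assumes S: "S \<subseteq> P" and i: "card S = i" "i < card P"
  shows "\<exists>p\<in>P-S. real (card (U (insert p S))) * (real (card P) - i)
            \<le> real (card (U S)) * (real (card P) - 1 - i*q)"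
proof -
  have finS: "finite S" using S finP finite_subset by blast
  have cPS: "card (P - S) = card P - i" using card_Diff_subset[OF finS S] i by simp
  have "card (P - S) > 0" using cPS i by auto
  hence ne: "P - S \<noteq> {}" using card_gt_0_iff[of "P - S"] by simp
  have finU: "finite (U S)" unfolding U_def using finP by auto
  have "(\<Sum>p\<in>P-S. card (U (insert p S))) = (\<Sum>p\<in>P-S. \<Sum>x\<in>U S. if p \<notin> F S x then 1 else 0)"
  proof (rule sum.cong)
    fix p assume p: "p \<in> P - S"
    have "card (U (insert p S)) = card {x\<in>U S. p \<notin> F S x}" using U_insert S p by auto
    also have "\<dots> = (\<Sum>x\<in>U S. if p \<notin> F S x then 1 else 0)"
      using sum.inter_filter[OF finU, of "\<lambda>_. 1::nat" "\<lambda>x. p \<notin> F S x"] by simp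
    finally show "card (U (insert p S)) = (\<Sum>x\<in>U S. if p \<notin> F S x then 1 else 0)" .
  qed simp
  also have "\<dots> = (\<Sum>x\<in>U S. \<Sum>p\<in>P-S. if p \<notin> F S x then 1 else 0)" by (rule sum.swap)
  also have "\<dots> = (\<Sum>x\<in>U S. card (P - F S x))"
  proof (rule sum.cong)
    fix x assume x: "x \<in> U S"
    have "(\<Sum>p\<in>P-S. if p \<notin> F S x then 1 else 0) = card {p\<in>P-S. p \<notin> F S x}"
      using sum.inter_filter[of "P-S" "\<lambda>_. 1::nat" "\<lambda>p. p \<notin> F S x"] finP by simp
    also have "{p\<in>P-S. p \<notin> F S x} = P - F S x" using S_sub_F[OF S x] by auto
    finally show "(\<Sum>p\<in>P-S. if p \<notin> F S x then 1 else 0) = card (P - F S x)" .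
  qed simp
  finally have E0: "(\<Sum>p\<in>P-S. card (U (insert p S))) = (\<Sum>x\<in>U S. card (P - F S x))" .
  have E: "(\<Sum>p\<in>P-S. real (card (U (insert p S)))) = (\<Sum>x\<in>U S. real (card (P - F S x)))"
    using arg_cong[OF E0, of real] by simp
  have B: "real (card (P - F S x)) \<le> real (card P) - 1 - i*q" if x: "x \<in> U S" for x
  proof -
    have "card (P - F S x) = card P - card (F S x)"
      using card_Diff_subset[OF _ F_sub[OF S x]] finP F_sub[OF S x] finite_subset by metis
    moreover have "card (F S x) \<le> card P" using F_sub[OF S x] finP card_mono by blast
    moreover have "card (F S x) \<ge> 1 + i * q" using card_F[OF S x] i by simp
    hence "real (1 + i * q) \<le> real (card (F S x))" by (rule of_nat_mono)
    ultimately show ?thesis by (simp add: of_nat_diff)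
  qed
  have "(\<Sum>x\<in>U S. real (card (P - F S x))) \<le> (\<Sum>x\<in>U S. real (card P) - 1 - i*q)"
    by (rule sum_mono) (use B in auto)
  also have "\<dots> = real (card (U S)) * (real (card P) - 1 - i*q)" by simp
  finally have T: "(\<Sum>p\<in>P-S. real (card (U (insert p S)))) \<le> real (card (U S)) * (real (card P) - 1 - i*q)"
    using E by simp
  obtain p where p: "p \<in> P - S" "real (card (U (insert p S))) * real (card (P - S)) \<le> (\<Sum>p\<in>P-S. real (card (U (insert p S))))"
    using avg[of "P - S" "\<lambda>p. real (card (U (insert p S)))"] finP ne by auto
  have cc: "real (card (P - S)) = real (card P) - i" using cPS i by (simp add: of_nat_diff)
  have "real (card (U (insert p S))) * (real (card P) - i) \<le> (\<Sum>p\<in>P-S. real (card (U (insert p S))))"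
    using p(2) unfolding cc .
  hence "real (card (U (insert p S))) * (real (card P) - i) \<le> real (card (U S)) * (real (card P) - 1 - i*q)"
    using T by (rule order_trans)
  thus ?thesis using p(1) by blast
qed


definition b :: "nat \<Rightarrow> real" where
  "b j = real j * (real q - 1) / (real q * (real q + 1))"

lemma b_nonneg: "b j \<ge> 0" using q2 unfolding b_def by simp

lemma b_le1: assumes "j \<le> q + 1" shows "b j \<le> 1"
proof -
  have "real j * (real q - 1) \<le> (real q + 1) * (real q - 1)"
    using assms q2 by (intro mult_right_mono) auto
  also have "\<dots> \<le> real q * (real q + 1)" by (simp add: algebra_simps)
  finally show ?thesis unfolding b_def using q2 by (simp add: divide_le_eq)
qed

lemma b_bound:
  assumes N: "N \<le> real q * real q + real q + 1" "real i < N"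
  shows "b i * (N - i) \<le> 1 + real i * (real q - 1)"
proof -
  have qq: "real q * (real q + 1) > 0" using q2 by simp
  have key: "real i * (real q - 1) * (1 - real i) \<le> 0"
  proof (cases "i = 0")
    case False hence "real i \<ge> 1" by simp
    thus ?thesis using q2 by (intro mult_nonneg_nonpos) auto
  qed simp
  have "b i * (N - i) \<le> b i * (real q * real q + real q + 1 - i)"
    using N b_nonneg by (intro mult_left_mono) auto
  also have "\<dots> = real i * (real q - 1) * (real q * (real q + 1) + (1 - real i)) / (real q * (real q + 1))"
    unfolding b_def by (simp add: algebra_simps)
  also have "\<dots> = real i * (real q - 1) + real i * (real q - 1) * (1 - real i) / (real q * (real q + 1))"
    using qq by (simp add: field_simps)
  also have "\<dots> \<le> real i * (real q - 1) + 0"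
    using key qq by (intro add_left_mono divide_nonpos_pos) auto
  finally show ?thesis by simp
qed

lemma greedy: "i \<le> q + 1 \<Longrightarrow> \<exists>S\<subseteq>P. card S = i \<and> real (card (U S)) \<le> real (card P) * (\<Prod>j<i. 1 - b j)"
proof (induction i)
  case 0
  have "U {} = P" unfolding U_def by auto
  thus ?case by (intro exI[of _ "{}"]) auto
next
  case (Suc i)
  then obtain S where S: "S \<subseteq> P" "card S = i" "real (card (U S)) \<le> real (card P) * (\<Prod>j<i. 1 - b j)"
    by auto
  have iP: "i < card P" using Suc.prems cardP_ge by simp
  obtain p where p: "p \<in> P - S" "real (card (U (insert p S))) * (real (card P) - i)
            \<le> real (card (U S)) * (real (card P) - 1 - i*q)"
    using step[OF S(1,2) iP] by blast
  define N where "N = real (card P)"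
  have NN: "N \<le> real q * real q + real q + 1" unfolding N_def using cardP
    by (metis of_nat_1 of_nat_add of_nat_mono of_nat_mult)
  have Ni: "real i < N" using iP unfolding N_def by simp
  have bb: "b i * (N - i) \<le> 1 + real i * (real q - 1)" using b_bound[OF NN Ni] .
  have fac: "N - 1 - i*q \<le> (1 - b i) * (N - i)" using bb by (simp add: algebra_simps)
  have "real (card (U (insert p S))) * (N - i) \<le> real (card (U S)) * ((1 - b i) * (N - i))"
    using p(2) fac unfolding N_def[symmetric]
    by (meson mult_left_mono of_nat_0_le_iff order_trans)
  hence r: "real (card (U (insert p S))) \<le> real (card (U S)) * (1 - b i)"
    using Ni by (simp add: mult.assoc[symmetric])
  have b1: "1 - b i \<ge> 0" using b_le1[of i] Suc.prems by simp
  have "real (card (U (insert p S))) \<le> real (card P) * (\<Prod>j<i. 1 - b j) * (1 - b i)"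
    using r S(3) b1 by (meson mult_right_mono order_trans)
  moreover have "card (insert p S) = Suc i"
  proof -
    have "finite S" using S(1) finP finite_subset by blast
    thus ?thesis using p(1) S(2) by simp
  qed
  ultimately show ?case using p S by (intro exI[of _ "insert p S"]) (auto simp: mult.assoc)
qed


lemma min_le: "saturating P L S \<Longrightarrow> min_saturating_size P L \<le> card S"
proof -
  assume s: "saturating P L S"
  have "{S. saturating P L S} \<subseteq> Pow P" unfolding saturating_def by auto
  hence "finite {S. saturating P L S}" by (rule finite_subset) (simp add: finP)
  thus ?thesis unfolding min_saturating_size_def using s by (intro Min_le) auto
qed

lemma main: "real (min_saturating_size P L) \<le> 2 * sqrt ((real q + 1) * ln (real q + 1)) + 2"
proof (cases "2 * sqrt ((real q + 1) * ln (real q + 1)) < real q")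
  case False
  obtain a b c where abc: "a\<in>P" "b\<in>P" "c\<in>P" "a\<noteq>b" "c \<notin> lin a b" using triangle by blast
  define l where "l = lin a b"
  have l: "l \<in> L" using lin abc l_def by auto
  have cl: "c \<notin> l" using abc l_def by simp
  have sat: "saturating P L (insert c l)"
    unfolding saturating_def
  proof (intro conjI ballI)
    show "insert c l \<subseteq> P" using abc l lsub by auto
  next
    fix x assume x: "x \<in> P - insert c l"
    have lx: "lin x c \<in> L" "x \<in> lin x c" "c \<in> lin x c" using lin[of x c] x abc by auto
    have "lin x c \<noteq> l" using lx cl by auto
    then obtain z where z: "z \<in> P" "z \<in> lin x c" "z \<in> l" using meet lx l by blast
    have zc: "z \<noteq> c" using z cl by auto
    show "\<exists>a\<in>insert c l. \<exists>b\<in>insert c l. a \<noteq> b \<and> (\<exists>la\<in>L. x \<in> la \<and> a \<in> la \<and> b \<in> la)"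
    proof (rule bexI[of _ z], rule bexI[of _ c])
      show "z \<noteq> c \<and> (\<exists>la\<in>L. x \<in> la \<and> z \<in> la \<and> c \<in> la)" using zc z lx by blast
    qed (use z in auto)
  qed
  have "card (insert c l) = q + 2" using cl finl l cardl by simp
  hence "real (min_saturating_size P L) \<le> real q + 2" using min_le[OF sat] by simp
  thus ?thesis using False by linarith
next
  case True
  define K where "K = 2 * sqrt ((real q + 1) * ln (real q + 1))"
  define j where "j = nat \<lfloor>K\<rfloor>"
  have K0: "K \<ge> 0" unfolding K_def using q2 by simp
  have JK: "real j \<le> K" unfolding j_def using K0 by (simp add: of_nat_nat)
  have jq: "j + 2 \<le> q + 1" using JK True unfolding K_def by linarith
  obtain S where S: "S \<subseteq> P" "card S = j + 2" "real (card (U S)) \<le> real (card P) * (\<Prod>i<j+2. 1 - b i)"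
    using greedy[OF jq] by blast
  have pr: "(\<Prod>i<j+2. 1 - b i) \<ge> 0" using b_le1 jq by (intro prod_nonneg) auto
  have NN: "real (card P) \<le> real q * real q + real q + 1" using cardP
    by (metis of_nat_1 of_nat_add of_nat_mono of_nat_mult)
  have "real (card P) * (\<Prod>i<j+2. 1 - b i) \<le> (real q * real q + real q + 1) * (\<Prod>i<j+2. 1 - b i)"
    using NN pr by (intro mult_right_mono) auto
  also have "\<dots> < 1" using analytic[OF q2 True j_def[unfolded K_def]] unfolding b_def by simp
  finally have "card (U S) = 0" using S(3) by simp
  moreover have "finite (U S)" unfolding U_def using finP by auto
  ultimately have "U S = {}" by simp
  hence "saturating P L S" using U_empty_sat S(1) by blast
  hence "min_saturating_size P L \<le> j + 2" using min_le S(2) by metis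
  hence "real (min_saturating_size P L) \<le> real (j + 2)" by (rule of_nat_mono)
  thus ?thesis using JK unfolding K_def by simp
qed

end

theorem theorem1:
  fixes P :: "'a set" and L :: "'a set set" and q :: nat
  assumes "projective_plane_of_order P L q" and "q \<ge> 2"
  shows "real (min_saturating_size P L)
           \<le> 2 * sqrt ((real q + 1) * ln (real q + 1)) + 2"
proof -
  interpret pp P L q using assms by unfold_locales
  show ?thesis by (rule main)
qed

end
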